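(* Fix any $\delta\ge 0$ and define the event \[\mathcal E_\delta=\left\{\sum_{i=1}^n\left[\log\left(\frac{P_j(\mathbf X_{ij}\mid \mathbf X_{i,-j})\,Q_j(\tilde{\mathbf X}_{ij}\mid \mathbf X_{i,-j})}{Q_j(\mathbf X_{ij}\mid \mathbf X_{i,-j})\,P_j(\tilde{\mathbf X}_{ij}\mid \mathbf X_{i,-j})}\right)\right]^2\le n\delta^2\text{ for all } j=1,\dots,p\right\}.\] Then \[\mathbb{P}\left(\max_{j=1,\dots,p}\widehat{\mathrm{KL}}_j\le\frac{n\delta^2}{2}+2\delta\sqrt{n\log(p)}\right)\ge 1-\frac1p-\mathbb{P}\big((\mathcal E_\delta)^c\big).\]
   Context: Setting: $X\in\mathbb{R}^p$ has distribution $P_X$; for $x\in\mathbb{R}^p$, $x_{-j}$ is $x$ with coordinate $j$ removed. Each $X_j$ is discrete or continuous, $P_j(\cdot\mid x_{-j})$ is the true conditional pmf/density of $X_j$ given $X_{-j}=x_{-j}$, and $Q_j(\cdot\mid x_{-j})$ is a fixed estimated conditional pmf/density of the same type with the same support. A knockoff mechanism $P_{\tilde X\mid X}(\cdot\mid x)$ (a conditional distribution on $\mathbb{R}^p$) is pairwise exchangeable with respect to $Q_j$ if for every distribution $D^{(j)}$ on $\mathbb{R}^p$ with conditional of $X_j$ given $X_{-j}$ equal to $Q_j$, drawing $X\sim D^{(j)}$, $\tilde X\mid X\sim P_{\tilde X\mid X}(\cdot\mid X)$ yields $(X_j,\tilde X_j,X_{-j},\tilde X_{-j})\overset{d}{=}(\tilde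 X_j,X_j,X_{-j},\tilde X_{-j})$; standing assumption: this holds for every $j=1,\dots,p$. Data: $\mathbf X\in\mathbb{R}^{n\times p}$ with i.i.d. rows $\mathbf X_{i,*}\sim P_X$, and $\tilde{\mathbf X}$ with rows drawn independently as $\tilde{\mathbf X}_{i,*}\sim P_{\tilde X\mid X}(\cdot\mid\mathbf X_{i,*})$. Define \[\widehat{\mathrm{KL}}_j=\sum_{i=1}^n\log\left(\frac{P_j(\mathbf X_{ij}\mid \mathbf X_{i,-j})\,Q_j(\tilde{\mathbf X}_{ij}\mid \mathbf X_{i,-j})}{Q_j(\mathbf X_{ij}\mid \mathbf X_{i,-j})\,P_j(\tilde{\mathbf X}_{ij}\mid \mathbf X_{i,-j})}\right).\] *)

theory Defs
  imports "HOL-Probability.Probability"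
begin

text \<open>Coordinates are indexed by I = {..<p}; a point of R^p is an (extensional)
  function nat => real, i.e. an element of the space of PiM I (%_. borel).
  For x in R^p, x_{-j} is represented by restrict x (I - {j}).\<close>

abbreviation Rp :: "nat \<Rightarrow> (nat \<Rightarrow> real) measure" where
  "Rp p \<equiv> PiM {..<p} (\<lambda>_. borel)"

abbreviation Rpmj :: "nat \<Rightarrow> nat \<Rightarrow> (nat \<Rightarrow> real) measure" where
  "Rpmj p j \<equiv> PiM ({..<p} - {j}) (\<lambda>_. borel)"

definition minus_coord :: "nat \<Rightarrow> nat \<Rightarrow> (nat \<Rightarrow> real) \<Rightarrow> (nat \<Rightarrow> real)" where
  "minus_coord p j x = restrict x ({..<p} - {j})"

definition counting_on :: "real set \<Rightarrow> real measure" where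
  "counting_on S = distr (count_space S) borel (\<lambda>t. t)"

definition discrete_or_continuous :: "real measure \<Rightarrow> bool" where
  "discrete_or_continuous \<nu> \<longleftrightarrow> \<nu> = lborel \<or> (\<exists>S. countable S \<and> \<nu> = counting_on S)"

text \<open>A conditional pmf/density (w.r.t. nu) of X_j given X_{-j}: f t y = f(t | y).\<close>
definition is_cond_density :: "nat \<Rightarrow> nat \<Rightarrow> real measure \<Rightarrow> (real \<Rightarrow> (nat \<Rightarrow> real) \<Rightarrow> real) \<Rightarrow> bool" where
  "is_cond_density p j \<nu> f \<longleftrightarrow>
     (\<lambda>(t, y). f t y) \<in> borel_measurable (pair_measure borel (Rpmj p j)) \<and>
     (\<forall>t y. 0 \<le> f t y) \<and>
     (\<forall>y. (\<integral>\<^sup>+ t. ennreal (f t y) \<partial>\<nu>) = 1)"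

text \<open>The distribution on R^p with X_{-j} marginal equal to that of D and conditional
  law of X_j given X_{-j} = y having density f(. | y) w.r.t. nu.\<close>
definition recombine :: "nat \<Rightarrow> nat \<Rightarrow> real measure \<Rightarrow> (real \<Rightarrow> (nat \<Rightarrow> real) \<Rightarrow> real)
    \<Rightarrow> (nat \<Rightarrow> real) measure \<Rightarrow> (nat \<Rightarrow> real) measure" where
  "recombine p j \<nu> f D =
     bind (distr D (Rpmj p j) (minus_coord p j))
          (\<lambda>y. distr (density \<nu> (\<lambda>t. ennreal (f t y))) (Rp p) (\<lambda>t. y(j := t)))"

definition has_conditional :: "nat \<Rightarrow> nat \<Rightarrow> real measure \<Rightarrow> (real \<Rightarrow> (nat \<Rightarrow> real) \<Rightarrow> real)
    \<Rightarrow> (nat \<Rightarrow> real) measure \<Rightarrow> bool" where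
  "has_conditional p j \<nu> f D \<longleftrightarrow> D = recombine p j \<nu> f D"

text \<open>Joint law of (X, tilde X) with X ~ D and tilde X | X ~ K X.\<close>
definition joint_law :: "nat \<Rightarrow> (nat \<Rightarrow> real) measure \<Rightarrow> ((nat \<Rightarrow> real) \<Rightarrow> (nat \<Rightarrow> real) measure)
    \<Rightarrow> ((nat \<Rightarrow> real) \<times> (nat \<Rightarrow> real)) measure" where
  "joint_law p D K = bind D (\<lambda>x. distr (K x) (pair_measure (Rp p) (Rp p)) (\<lambda>xt. (x, xt)))"

definition swap_coord :: "nat \<Rightarrow> (nat \<Rightarrow> real) \<times> (nat \<Rightarrow> real) \<Rightarrow> (nat \<Rightarrow> real) \<times> (nat \<Rightarrow> real)" where
  "swap_coord j z = ((fst z)(j := snd z j), (snd z)(j := fst z j))"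

definition pairwise_exchangeable :: "nat \<Rightarrow> nat \<Rightarrow> real measure \<Rightarrow> (real \<Rightarrow> (nat \<Rightarrow> real) \<Rightarrow> real)
    \<Rightarrow> ((nat \<Rightarrow> real) \<Rightarrow> (nat \<Rightarrow> real) measure) \<Rightarrow> bool" where
  "pairwise_exchangeable p j \<nu> Qj K \<longleftrightarrow>
     (\<forall>D. prob_space D \<and> sets D = sets (Rp p) \<and> has_conditional p j \<nu> Qj D \<longrightarrow>
        distr (joint_law p D K) (pair_measure (Rp p) (Rp p)) (swap_coord j) = joint_law p D K)"

definition llr :: "nat \<Rightarrow> (nat \<Rightarrow> real \<Rightarrow> (nat \<Rightarrow> real) \<Rightarrow> real) \<Rightarrow> (nat \<Rightarrow> real \<Rightarrow> (nat \<Rightarrow> real) \<Rightarrow> real)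
    \<Rightarrow> nat \<Rightarrow> (nat \<Rightarrow> real) \<Rightarrow> (nat \<Rightarrow> real) \<Rightarrow> real" where
  "llr p P Q j x xt =
     ln ((P j (x j) (minus_coord p j x) * Q j (xt j) (minus_coord p j x)) /
         (Q j (x j) (minus_coord p j x) * P j (xt j) (minus_coord p j x)))"

text \<open>widehat KL_j for data omega, omega i = (row i of X, row i of tilde X).\<close>
definition KLhat :: "nat \<Rightarrow> nat \<Rightarrow> (nat \<Rightarrow> real \<Rightarrow> (nat \<Rightarrow> real) \<Rightarrow> real) \<Rightarrow> (nat \<Rightarrow> real \<Rightarrow> (nat \<Rightarrow> real) \<Rightarrow> real)
    \<Rightarrow> nat \<Rightarrow> (nat \<Rightarrow> (nat \<Rightarrow> real) \<times> (nat \<Rightarrow> real)) \<Rightarrow> real" where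
  "KLhat p n P Q j \<omega> = (\<Sum>i<n. llr p P Q j (fst (\<omega> i)) (snd (\<omega> i)))"

end

theory Submission
  imports Defs
begin

lemma sinh_le_x_cosh: "0 \<le> (x::real) \<Longrightarrow> sinh x \<le> x * cosh x"
proof -
  assume x: "0 \<le> x"
  have "(\<lambda>x. x * cosh x - sinh x) 0 \<le> (\<lambda>x. x * cosh x - sinh x) x"
  proof (rule DERIV_nonneg_imp_nondecreasing[OF x])
    fix y :: real assume "0 \<le> y" "y \<le> x"
    show "\<exists>d. ((\<lambda>x. x * cosh x - sinh x) has_real_derivative d) (at y) \<and> 0 \<le> d"
      apply (rule exI[of _ "y * sinh y"])
      using \<open>0 \<le> y\<close>
      by (auto intro!: derivative_eq_intros simp: zero_le_mult_iff)
  qed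
  thus ?thesis by simp
qed

lemma cosh_gauss_mono:
  assumes "0 \<le> b" "b \<le> (a::real)"
  shows "cosh a * exp (- (a^2/2)) \<le> cosh b * exp (- (b^2/2))"
proof -
  have "(\<lambda>x. cosh x * exp (- (x^2/2))) a \<le> (\<lambda>x. cosh x * exp (- (x^2/2))) b"
  proof (rule DERIV_nonpos_imp_nonincreasing[OF assms(2)])
    fix y :: real assume y: "b \<le> y" "y \<le> a"
    have "sinh y - y * cosh y \<le> 0" using sinh_le_x_cosh[of y] y assms by simp
    then have "(sinh y - y * cosh y) * exp (- (y^2/2)) \<le> 0"
      by (simp add: mult_nonpos_nonneg)
    moreover have "((\<lambda>x. cosh x * exp (- (x^2/2))) has_real_derivative
       (sinh y - y * cosh y) * exp (- (y^2/2))) (at y)"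
      by (auto intro!: derivative_eq_intros simp: algebra_simps power2_eq_square)
    ultimately show "\<exists>d. ((\<lambda>x. cosh x * exp (- (x^2/2))) has_real_derivative d) (at y) \<and> d \<le> 0"
      by blast
  qed
  thus ?thesis by simp
qed

lemma cosh_ratio:
  assumes "0 \<le> b" "b \<le> (a::real)"
  shows "cosh a \<le> cosh b * exp ((a^2 - b^2)/2)"
proof -
  have "cosh a = cosh a * exp (- (a^2/2)) * exp (a^2/2)"
    by (simp add: mult.assoc exp_minus field_simps)
  also have "\<dots> \<le> cosh b * exp (- (b^2/2)) * exp (a^2/2)"
    using cosh_gauss_mono[OF assms] by (intro mult_right_mono) auto
  also have "\<dots> = cosh b * exp ((a^2 - b^2)/2)"
    by (simp add: mult.assoc exp_add[symmetric] diff_divide_distrib)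
  finally show ?thesis .
qed

definition Fexp :: "real \<Rightarrow> real \<Rightarrow> real" where
  "Fexp l u = exp (l * u - (l + l^2)/2 * u^2)"

lemma Phi_le_1:
  assumes l: "0 \<le> l"
  shows "Fexp l u * exp u + Fexp l (-u) \<le> 1 + exp u"
proof -
  define a where "a = \<bar>(l + 1/2) * u\<bar>"
  define b where "b = \<bar>u\<bar>/2"
  have ab: "0 \<le> b" "b \<le> a" using l mult_nonneg_nonneg[OF l abs_ge_zero[of u]]
  proof -
    have "(l + 1/2) * \<bar>u\<bar> * 2 = 2*(l*\<bar>u\<bar>) + \<bar>u\<bar>" by (simp add: algebra_simps)
    then show "0 \<le> b" "b \<le> a" using l mult_nonneg_nonneg[OF l abs_ge_zero[of u]]
      unfolding a_def b_def abs_mult by auto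
  qed
  have ca: "cosh a = cosh ((l + 1/2) * u)" unfolding a_def by (simp add: abs_if)
  have cb: "cosh b = cosh (u/2)" unfolding b_def by (simp add: abs_if)
  have e: "(a^2 - b^2)/2 = (l + l^2)/2 * u^2"
    unfolding a_def b_def by (simp add: power2_eq_square field_simps)
  have key: "cosh ((l + 1/2) * u) \<le> cosh (u/2) * exp ((l + l^2)/2 * u^2)"
    using cosh_ratio[OF ab] ca cb e by simp
  define c where "c = (l + l^2)/2 * u^2"
  have lhs: "Fexp l u * exp u + Fexp l (-u) = exp (-c) * exp (u/2) * (2 * cosh ((l + 1/2) * u))"
  proof -
    have 1: "exp (u/2) * exp ((l + 1/2) * u) = exp (l*u + u)"
      by (simp add: exp_add[symmetric] algebra_simps)
    have 2: "exp (u/2) * exp (- ((l + 1/2) * u)) = exp (- (l*u))"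
      by (simp add: exp_add[symmetric] algebra_simps)
    have "exp (-c) * exp (u/2) * (2 * cosh ((l + 1/2) * u))
       = exp (-c) * (exp (u/2) * exp ((l + 1/2) * u) + exp (u/2) * exp (- ((l + 1/2) * u)))"
      unfolding cosh_def by (simp add: algebra_simps)
    also have "\<dots> = exp (-c) * exp (l*u + u) + exp (-c) * exp (- (l*u))"
      unfolding 1 2 by (simp add: algebra_simps)
    also have "\<dots> = Fexp l u * exp u + Fexp l (-u)"
      unfolding Fexp_def c_def by (simp add: exp_add[symmetric] algebra_simps)
    finally show ?thesis by simp
  qed
  have rhs: "1 + exp u = exp (u/2) * (2 * cosh (u/2))"
    unfolding cosh_def by (simp add: algebra_simps exp_add[symmetric] exp_minus)
  have "exp (-c) * exp (u/2) * (2 * cosh ((l + 1/2) * u)) \<le> exp (-c) * exp (u/2) * (2 * (cosh (u/2) * exp c))"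
    using key unfolding c_def by (intro mult_left_mono) auto
  also have "\<dots> = exp (u/2) * (2 * cosh (u/2))" by (simp add: exp_minus field_simps)
  finally show ?thesis using lhs rhs by simp
qed

lemma nu_facts:
  assumes "discrete_or_continuous \<nu>"
  shows "sets \<nu> = sets borel" "sigma_finite_measure \<nu>"
proof -
  have "\<nu> = lborel \<or> (\<exists>S. countable S \<and> \<nu> = counting_on S)"
    using assms unfolding discrete_or_continuous_def .
  then have "sets \<nu> = sets borel \<and> sigma_finite_measure \<nu>"
  proof
    assume "\<nu> = lborel" then show ?thesis by (simp add: lborel.sigma_finite_measure_axioms)
  next
    assume "\<exists>S. countable S \<and> \<nu> = counting_on S"
    then obtain S where S: "countable S" and nu: "\<nu> = counting_on S" by blast
    have Sb: "S \<in> sets borel" by (rule sets.countable[OF _ S]) simp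
    have em: "emeasure \<nu> X = emeasure (count_space S) (X \<inter> S)" if "X \<in> sets borel" for X
    proof -
      have "emeasure \<nu> X = emeasure (count_space S) ((\<lambda>t. t) -` X \<inter> space (count_space S))"
        unfolding nu counting_on_def using that by (intro emeasure_distr) auto
      also have "(\<lambda>t. t) -` X \<inter> space (count_space S) = X \<inter> S" by auto
      finally show ?thesis .
    qed
    have sets: "sets \<nu> = sets borel" unfolding nu counting_on_def by simp
    let ?A = "insert (UNIV - S) ((\<lambda>s. {s}) ` S)"
    have A1: "countable ?A" using S by simp
    have A2: "?A \<subseteq> sets \<nu>" using Sb unfolding sets by auto
    have A3: "\<Union> ?A = space \<nu>" unfolding sets_eq_imp_space_eq[OF sets] by auto
    have A4: "\<forall>a\<in>?A. emeasure \<nu> a \<noteq> \<infinity>"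
    proof
      fix a assume "a \<in> ?A"
      then show "emeasure \<nu> a \<noteq> \<infinity>"
      proof
        assume a: "a = UNIV - S" 
        have "a \<inter> S = {}" using a by auto
        then show ?thesis using em[of a] Sb a by auto
      next
        assume "a \<in> (\<lambda>s. {s}) ` S"
        then obtain s where "a = {s}" "s \<in> S" by auto
        then show ?thesis using em[of a] by (auto simp: emeasure_count_space)
      qed
    qed
    have "sigma_finite_measure \<nu>"
      unfolding sigma_finite_measure_def using A1 A2 A3 A4 by blast
    with sets show ?thesis by simp
  qed
  then show "sets \<nu> = sets borel" "sigma_finite_measure \<nu>" by auto
qed
definition kern :: "nat \<Rightarrow> nat \<Rightarrow> real measure \<Rightarrow> (real \<Rightarrow> (nat \<Rightarrow> real) \<Rightarrow> real) \<Rightarrow> (nat \<Rightarrow> real) \<Rightarrow> (nat \<Rightarrow> real) measure" where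
  "kern p j \<nu> f y = distr (density \<nu> (\<lambda>t. ennreal (f t y))) (Rp p) (\<lambda>t. y(j := t))"

context
  fixes p j :: nat
  assumes jp: "j < p"
begin

lemma I_eq: "insert j ({..<p} - {j}) = {..<p}" using jp by auto

lemma mc_meas[measurable]: "minus_coord p j \<in> measurable (Rp p) (Rpmj p j)"
  unfolding minus_coord_def by (rule measurable_restrict_subset) auto

lemma upd_meas[measurable]: "(\<lambda>(y, t). y(j := t)) \<in> measurable (Rpmj p j \<Otimes>\<^sub>M borel) (Rp p)"
  using measurable_add_dim[of j "{..<p} - {j}" "\<lambda>_. borel"] unfolding I_eq .

lemma upd_meas1: "y \<in> space (Rpmj p j) \<Longrightarrow> (\<lambda>t. y(j := t)) \<in> measurable borel (Rp p)"
  using measurable_component_update[of y "{..<p} - {j}" "\<lambda>_. borel" j] unfolding I_eq by simp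

lemma mc_upd: "y \<in> space (Rpmj p j) \<Longrightarrow> minus_coord p j (y(j := t)) = y"
  unfolding minus_coord_def by (auto simp: space_PiM PiE_def extensional_def)

lemma upd_mc: "x \<in> space (Rp p) \<Longrightarrow> (minus_coord p j x)(j := x j) = x"
  unfolding minus_coord_def using jp by (auto simp: space_PiM PiE_def extensional_def)

lemma mc_upd2: "minus_coord p j (x(j := t)) = minus_coord p j x"
  unfolding minus_coord_def by auto

lemma mc_space: "x \<in> space (Rp p) \<Longrightarrow> minus_coord p j x \<in> space (Rpmj p j)"
  using measurable_space[OF mc_meas] by blast

lemma upd_space: "y \<in> space (Rpmj p j) \<Longrightarrow> y(j := t) \<in> space (Rp p)"
  using measurable_space[OF upd_meas1] by auto

lemma dens_comp:
  assumes f: "is_cond_density p j \<nu> f"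
    and a: "a \<in> measurable N borel" and b: "b \<in> measurable N (Rpmj p j)"
  shows "(\<lambda>z. f (a z) (b z)) \<in> borel_measurable N"
proof -
  have "(\<lambda>(t, y). f t y) \<in> borel_measurable (borel \<Otimes>\<^sub>M Rpmj p j)"
    using f unfolding is_cond_density_def by blast
  from measurable_compose[OF measurable_Pair[OF a b] this] show ?thesis by simp
qed


context
  fixes \<nu> :: "real measure" and f :: "real \<Rightarrow> (nat \<Rightarrow> real) \<Rightarrow> real"
  assumes nu_sets: "sets \<nu> = sets borel" and nu_sf: "sigma_finite_measure \<nu>"
    and f: "is_cond_density p j \<nu> f"
begin

lemma f_meas2: "(\<lambda>(y, t). f t y) \<in> borel_measurable (Rpmj p j \<Otimes>\<^sub>M \<nu>)"
proof -
  have "(\<lambda>(t, y). f t y) \<in> borel_measurable (borel \<Otimes>\<^sub>M Rpmj p j)"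
    using f unfolding is_cond_density_def by blast
  from measurable_pair_swap[OF this] show ?thesis
    by (subst measurable_cong_sets[OF sets_pair_measure_cong[OF refl nu_sets] refl]) simp
qed

lemma f_nonneg: "0 \<le> f t y" using f unfolding is_cond_density_def by blast

lemma f_int1: "(\<integral>\<^sup>+ t. ennreal (f t y) \<partial>\<nu>) = 1" using f unfolding is_cond_density_def by blast

lemma inner_meas:
  assumes h: "h \<in> borel_measurable (Rp p)"
  shows "(\<lambda>(y, t). ennreal (f t y) * h (y(j := t))) \<in> borel_measurable (Rpmj p j \<Otimes>\<^sub>M \<nu>)"
proof -
  have 1: "(\<lambda>(y, t). ennreal (f t y)) \<in> borel_measurable (Rpmj p j \<Otimes>\<^sub>M \<nu>)"
    using f_meas2 by (simp add: split_beta')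
  have "(\<lambda>(y, t). y(j := t)) \<in> measurable (Rpmj p j \<Otimes>\<^sub>M \<nu>) (Rp p)"
    by (subst measurable_cong_sets[OF sets_pair_measure_cong[OF refl nu_sets] refl]) (rule upd_meas)
  from measurable_compose[OF this h] have 2: "(\<lambda>z. h (case z of (y, t) \<Rightarrow> y(j := t))) \<in> borel_measurable (Rpmj p j \<Otimes>\<^sub>M \<nu>)" .
  have "(\<lambda>z. (case z of (y, t) \<Rightarrow> ennreal (f t y)) * h (case z of (y, t) \<Rightarrow> y(j := t))) \<in> borel_measurable (Rpmj p j \<Otimes>\<^sub>M \<nu>)"
    using 1 2 by measurable
  then show ?thesis by (simp add: split_beta')
qed

lemma inner_int_meas:
  assumes h: "h \<in> borel_measurable (Rp p)"
  shows "(\<lambda>y. \<integral>\<^sup>+ t. ennreal (f t y) * h (y(j := t)) \<partial>\<nu>) \<in> borel_measurable (Rpmj p j)"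
  using sigma_finite_measure.borel_measurable_nn_integral[OF nu_sf, of "\<lambda>y t. ennreal (f t y) * h (y(j := t))"]
    inner_meas[OF h] by simp

lemma kern_int:
  assumes h: "h \<in> borel_measurable (Rp p)" and y: "y \<in> space (Rpmj p j)"
  shows "(\<integral>\<^sup>+ x. h x \<partial>kern p j \<nu> f y) = (\<integral>\<^sup>+ t. ennreal (f t y) * h (y(j := t)) \<partial>\<nu>)"
proof -
  have m: "(\<lambda>t. y(j := t)) \<in> measurable \<nu> (Rp p)"
    using upd_meas1[OF y] by (simp add: measurable_cong_sets[OF nu_sets refl])
  have md: "(\<lambda>t. y(j := t)) \<in> measurable (density \<nu> (\<lambda>t. ennreal (f t y))) (Rp p)"
    using m by simp
  have fm: "(\<lambda>t. ennreal (f t y)) \<in> borel_measurable \<nu>"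
    using measurable_compose[OF measurable_compose_Pair1[OF y f_meas2] measurable_ennreal] by simp
  show ?thesis unfolding kern_def
    by (subst nn_integral_distr[OF md]) (auto simp: h nn_integral_density[OF fm] measurable_compose[OF m h])
qed

lemma kern_prob: "y \<in> space (Rpmj p j) \<Longrightarrow> prob_space (kern p j \<nu> f y)"
proof -
  assume y: "y \<in> space (Rpmj p j)"
  have sp: "space (kern p j \<nu> f y) = space (Rp p)" unfolding kern_def by simp
  have "emeasure (kern p j \<nu> f y) (space (kern p j \<nu> f y)) = (\<integral>\<^sup>+ x. 1 \<partial>kern p j \<nu> f y)"
    by simp
  also have "\<dots> = (\<integral>\<^sup>+ t. ennreal (f t y) * 1 \<partial>\<nu>)" by (rule kern_int[OF _ y]) simp
  also have "\<dots> = 1" using f_int1 by simp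
  finally show ?thesis by (rule prob_spaceI)
qed

lemma kern_sets: "sets (kern p j \<nu> f y) = sets (Rp p)" unfolding kern_def by simp

lemma kern_meas: "kern p j \<nu> f \<in> measurable (Rpmj p j) (subprob_algebra (Rp p))"
proof (rule measurable_subprob_algebra)
  fix a assume "a \<in> space (Rpmj p j)"
  then show "subprob_space (kern p j \<nu> f a)" using kern_prob prob_space_imp_subprob_space by blast
next
  fix a show "sets (kern p j \<nu> f a) = sets (Rp p)" by (rule kern_sets)
next
  fix A assume A: "A \<in> sets (Rp p)"
  have "(\<lambda>y. \<integral>\<^sup>+ t. ennreal (f t y) * indicator A (y(j := t)) \<partial>\<nu>) \<in> borel_measurable (Rpmj p j)"
    using A by (intro inner_int_meas) simp
  then show "(\<lambda>a. emeasure (kern p j \<nu> f a) A) \<in> borel_measurable (Rpmj p j)"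
  proof (rule measurable_cong[THEN iffD1, rotated])
    fix w assume w: "w \<in> space (Rpmj p j)"
    have "emeasure (kern p j \<nu> f w) A = (\<integral>\<^sup>+ x. indicator A x \<partial>kern p j \<nu> f w)"
      using A kern_sets by (simp add: nn_integral_indicator)
    also have "\<dots> = (\<integral>\<^sup>+ t. ennreal (f t w) * indicator A (w(j := t)) \<partial>\<nu>)"
      using A w by (intro kern_int) auto
    finally show "(\<integral>\<^sup>+ t. ennreal (f t w) * indicator A (w(j := t)) \<partial>\<nu>) = emeasure (kern p j \<nu> f w) A" by simp
  qed
qed

end
end

lemma recomb_kern: "recombine p j \<nu> f D = bind (distr D (Rpmj p j) (minus_coord p j)) (kern p j \<nu> f)"
  unfolding recombine_def kern_def ..

lemma recomb_int:
  assumes jp: "j < p" and nu_sets: "sets \<nu> = sets borel" and nu_sf: "sigma_finite_measure \<nu>"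
    and f: "is_cond_density p j \<nu> f" and D: "sets D = sets (Rp p)"
    and h: "h \<in> borel_measurable (Rp p)"
  shows "(\<integral>\<^sup>+ x. h x \<partial>recombine p j \<nu> f D)
       = (\<integral>\<^sup>+ x. \<integral>\<^sup>+ t. ennreal (f t (minus_coord p j x)) * h ((minus_coord p j x)(j := t)) \<partial>\<nu> \<partial>D)"
proof -
  have mc: "minus_coord p j \<in> measurable D (Rpmj p j)"
    using mc_meas[OF jp] by (simp add: measurable_cong_sets[OF D refl])
  have km: "kern p j \<nu> f \<in> measurable (distr D (Rpmj p j) (minus_coord p j)) (subprob_algebra (Rp p))"
    using kern_meas[OF jp nu_sets nu_sf f] by (simp add: measurable_cong_sets[OF sets_distr refl])
  have "(\<integral>\<^sup>+ x. h x \<partial>recombine p j \<nu> f D)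
      = (\<integral>\<^sup>+ y. \<integral>\<^sup>+ x. h x \<partial>kern p j \<nu> f y \<partial>distr D (Rpmj p j) (minus_coord p j))"
    unfolding recomb_kern by (rule nn_integral_bind[OF h km])
  also have "\<dots> = (\<integral>\<^sup>+ y. \<integral>\<^sup>+ t. ennreal (f t y) * h (y(j := t)) \<partial>\<nu> \<partial>distr D (Rpmj p j) (minus_coord p j))"
    by (intro nn_integral_cong kern_int[OF jp nu_sets nu_sf f h]) simp
  also have "\<dots> = (\<integral>\<^sup>+ x. \<integral>\<^sup>+ t. ennreal (f t (minus_coord p j x)) * h ((minus_coord p j x)(j := t)) \<partial>\<nu> \<partial>D)"
    using inner_int_meas[OF jp nu_sets nu_sf f h]
    by (intro nn_integral_distr[OF mc]) simp
  finally show ?thesis .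
qed


context
  fixes p :: nat and K :: "(nat \<Rightarrow> real) \<Rightarrow> (nat \<Rightarrow> real) measure"
  assumes Kk: "K \<in> measurable (Rp p) (prob_algebra (Rp p))"
begin

lemma K_sets: "x \<in> space (Rp p) \<Longrightarrow> sets (K x) = sets (Rp p)"
  using measurable_space[OF Kk] by (auto simp: space_prob_algebra)

lemma K_prob: "x \<in> space (Rp p) \<Longrightarrow> prob_space (K x)"
  using measurable_space[OF Kk] by (auto simp: space_prob_algebra)

lemma jk_meas:
  assumes M: "sets M = sets (Rp p)"
  shows "(\<lambda>x. distr (K x) (Rp p \<Otimes>\<^sub>M Rp p) (\<lambda>xt. (x, xt))) \<in> measurable M (subprob_algebra (Rp p \<Otimes>\<^sub>M Rp p))"
proof -
  have K': "K \<in> measurable M (subprob_algebra (Rp p))"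
    using measurable_prob_algebraD[OF Kk] by (simp add: measurable_cong_sets[OF M refl])
  have "(\<lambda>(x, xt). (x, xt)) \<in> measurable (M \<Otimes>\<^sub>M Rp p) (Rp p \<Otimes>\<^sub>M Rp p)"
    by (simp add: measurable_cong_sets[OF sets_pair_measure_cong[OF M refl] refl])
  from measurable_distr2[OF this K'] show ?thesis .
qed

lemma joint_sets:
  assumes M: "sets M = sets (Rp p)" "space M \<noteq> {}"
  shows "sets (joint_law p M K) = sets (Rp p \<Otimes>\<^sub>M Rp p)"
  unfolding joint_law_def by (rule sets_bind) (auto simp: M)

lemma joint_int:
  assumes M: "sets M = sets (Rp p)" and G: "G \<in> borel_measurable (Rp p \<Otimes>\<^sub>M Rp p)"
  shows "(\<integral>\<^sup>+ z. G z \<partial>joint_law p M K) = (\<integral>\<^sup>+ x. \<integral>\<^sup>+ xt. G (x, xt) \<partial>K x \<partial>M)"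
proof -
  have "(\<integral>\<^sup>+ z. G z \<partial>joint_law p M K) = (\<integral>\<^sup>+ x. \<integral>\<^sup>+ z. G z \<partial>distr (K x) (Rp p \<Otimes>\<^sub>M Rp p) (\<lambda>xt. (x, xt)) \<partial>M)"
    unfolding joint_law_def by (rule nn_integral_bind[OF G jk_meas[OF M]])
  also have "\<dots> = (\<integral>\<^sup>+ x. \<integral>\<^sup>+ xt. G (x, xt) \<partial>K x \<partial>M)"
  proof (intro nn_integral_cong)
    fix x assume x: "x \<in> space M"
    then have x': "x \<in> space (Rp p)" using sets_eq_imp_space_eq[OF M] by simp
    have "(\<lambda>xt. (x, xt)) \<in> measurable (K x) (Rp p \<Otimes>\<^sub>M Rp p)"
      using x' by (simp add: measurable_cong_sets[OF K_sets[OF x'] refl])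
    then show "(\<integral>\<^sup>+ z. G z \<partial>distr (K x) (Rp p \<Otimes>\<^sub>M Rp p) (\<lambda>xt. (x, xt))) = (\<integral>\<^sup>+ xt. G (x, xt) \<partial>K x)"
      using G by (subst nn_integral_distr) auto
  qed
  finally show ?thesis .
qed

lemma joint_inner_meas:
  assumes M: "sets M = sets (Rp p)" and G: "G \<in> borel_measurable (Rp p \<Otimes>\<^sub>M Rp p)"
  shows "(\<lambda>x. \<integral>\<^sup>+ xt. G (x, xt) \<partial>K x) \<in> borel_measurable M"
proof -
  have K': "K \<in> measurable M (subprob_algebra (Rp p))"
    using measurable_prob_algebraD[OF Kk] by (simp add: measurable_cong_sets[OF M refl])
  have "(\<lambda>(x, y). G (x, y)) \<in> borel_measurable (M \<Otimes>\<^sub>M Rp p)"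
    using G by (simp add: measurable_cong_sets[OF sets_pair_measure_cong[OF M refl] refl])
  from nn_integral_measurable_subprob_algebra2[OF this K'] show ?thesis by simp
qed

lemma joint_fst:
  assumes M: "sets M = sets (Rp p)" and h: "h \<in> borel_measurable (Rp p)"
  shows "(\<integral>\<^sup>+ z. h (fst z) \<partial>joint_law p M K) = (\<integral>\<^sup>+ x. h x \<partial>M)"
proof -
  have "(\<integral>\<^sup>+ z. h (fst z) \<partial>joint_law p M K) = (\<integral>\<^sup>+ x. \<integral>\<^sup>+ xt. h x \<partial>K x \<partial>M)"
    using h by (subst joint_int[OF M]) auto
  also have "\<dots> = (\<integral>\<^sup>+ x. h x \<partial>M)"
  proof (intro nn_integral_cong)
    fix x assume x: "x \<in> space M"
    then have x': "x \<in> space (Rp p)" using sets_eq_imp_space_eq[OF M] by simp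
    interpret prob_space "K x" using K_prob[OF x'] .
    show "(\<integral>\<^sup>+ xt. h x \<partial>K x) = h x" by (simp add: emeasure_space_1)
  qed
  finally show ?thesis .
qed

lemma joint_prob:
  assumes M: "sets M = sets (Rp p)" "prob_space M"
  shows "prob_space (joint_law p M K)"
proof (rule prob_spaceI)
  interpret M: prob_space M by fact
  have "emeasure (joint_law p M K) (space (joint_law p M K)) = (\<integral>\<^sup>+ z. (\<lambda>_. 1) (fst z) \<partial>joint_law p M K)"
    by simp
  also have "\<dots> = 1" by (subst joint_fst[OF M(1)]) (auto simp: M.emeasure_space_1)
  finally show "emeasure (joint_law p M K) (space (joint_law p M K)) = 1" .
qed

end

lemma ennreal_ratio:
  assumes "0 \<le> (q::real)" "0 \<le> r" "0 < r \<longleftrightarrow> 0 < q"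
  shows "ennreal q * (a * ennreal (r / q)) = ennreal r * a"
proof (cases "q = 0")
  case True then show ?thesis using assms by simp
next
  case False
  then have "ennreal q * ennreal (r / q) = ennreal r"
    using assms by (simp add: ennreal_mult[symmetric])
  then show ?thesis by (metis mult.assoc mult.commute)
qed

context
  fixes p j :: nat and \<nu> :: "real measure" and P Q :: "nat \<Rightarrow> real \<Rightarrow> (nat \<Rightarrow> real) \<Rightarrow> real"
    and PX :: "(nat \<Rightarrow> real) measure" and K :: "(nat \<Rightarrow> real) \<Rightarrow> (nat \<Rightarrow> real) measure"
  assumes jp: "j < p" and nu_sets: "sets \<nu> = sets borel" and nu_sf: "sigma_finite_measure \<nu>"
    and Pd: "is_cond_density p j \<nu> (P j)" and Qd: "is_cond_density p j \<nu> (Q j)"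
    and PXp: "prob_space PX" and PXs: "sets PX = sets (Rp p)"
    and Ptrue: "has_conditional p j \<nu> (P j) PX"
    and supp: "\<And>t y. 0 < P j t y \<longleftrightarrow> 0 < Q j t y"
    and Kk: "K \<in> measurable (Rp p) (prob_algebra (Rp p))"
    and exch: "pairwise_exchangeable p j \<nu> (Q j) K"
begin

lemma mc_idem: "minus_coord p j (minus_coord p j x) = minus_coord p j x"
  unfolding minus_coord_def by auto

abbreviation "DD \<equiv> recombine p j \<nu> (Q j) PX"

lemma PX_int:
  assumes h: "h \<in> borel_measurable (Rp p)"
  shows "(\<integral>\<^sup>+ x. h x \<partial>PX) = (\<integral>\<^sup>+ x. \<integral>\<^sup>+ t. ennreal (P j t (minus_coord p j x)) * h ((minus_coord p j x)(j := t)) \<partial>\<nu> \<partial>PX)"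
proof -
  have eq: "PX = recombine p j \<nu> (P j) PX" using Ptrue unfolding has_conditional_def .
  have "(\<integral>\<^sup>+ x. h x \<partial>PX) = (\<integral>\<^sup>+ x. h x \<partial>recombine p j \<nu> (P j) PX)"
    by (rule arg_cong[where f="\<lambda>M. integral\<^sup>N M h", OF eq])
  then show ?thesis using recomb_int[OF jp nu_sets nu_sf Pd PXs h] by simp
qed

lemma DD_int:
  assumes h: "h \<in> borel_measurable (Rp p)"
  shows "(\<integral>\<^sup>+ x. h x \<partial>DD) = (\<integral>\<^sup>+ x. \<integral>\<^sup>+ t. ennreal (Q j t (minus_coord p j x)) * h ((minus_coord p j x)(j := t)) \<partial>\<nu> \<partial>PX)"
  by (rule recomb_int[OF jp nu_sets nu_sf Qd PXs h])

lemma DD_sets: "sets DD = sets (Rp p)"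
proof -
  interpret PX: prob_space PX by (rule PXp)
  have mc: "minus_coord p j \<in> measurable PX (Rpmj p j)"
    using mc_meas[OF jp] by (simp add: measurable_cong_sets[OF PXs refl])
  have "space (distr PX (Rpmj p j) (minus_coord p j)) \<noteq> {}"
    using prob_space.not_empty[OF PX.prob_space_distr[OF mc]] .
  then show ?thesis unfolding recomb_kern by (intro sets_bind) (auto simp: kern_sets[OF jp nu_sets nu_sf Qd])
qed

lemma DD_prob: "prob_space DD"
proof (rule prob_spaceI)
  interpret PX: prob_space PX by (rule PXp)
  have "emeasure DD (space DD) = (\<integral>\<^sup>+ x. 1 \<partial>DD)" by simp
  also have "\<dots> = (\<integral>\<^sup>+ x. \<integral>\<^sup>+ t. ennreal (Q j t (minus_coord p j x)) * 1 \<partial>\<nu> \<partial>PX)"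
    by (rule DD_int) simp
  also have "\<dots> = (\<integral>\<^sup>+ x. 1 \<partial>PX)"
    using f_int1[OF jp nu_sets nu_sf Qd] by simp
  also have "\<dots> = 1" using PX.emeasure_space_1 by simp
  finally show "emeasure DD (space DD) = 1" .
qed

definition R :: "(nat \<Rightarrow> real) \<Rightarrow> real" where
  "R x = P j (x j) (minus_coord p j x) / Q j (x j) (minus_coord p j x)"

lemma R_meas[measurable]: "R \<in> borel_measurable (Rp p)"
proof -
  have "(\<lambda>x. P j (x j) (minus_coord p j x)) \<in> borel_measurable (Rp p)"
    using jp by (intro dens_comp[OF jp Pd] mc_meas) auto
  moreover have "(\<lambda>x. Q j (x j) (minus_coord p j x)) \<in> borel_measurable (Rp p)"
    using jp by (intro dens_comp[OF jp Qd] mc_meas) auto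
  ultimately show ?thesis unfolding R_def by measurable
qed

lemma CM:
  assumes h: "h \<in> borel_measurable (Rp p)"
  shows "(\<integral>\<^sup>+ x. h x * ennreal (R x) \<partial>DD) = (\<integral>\<^sup>+ x. h x \<partial>PX)"
proof -
  have "(\<integral>\<^sup>+ x. h x * ennreal (R x) \<partial>DD)
     = (\<integral>\<^sup>+ x. \<integral>\<^sup>+ t. ennreal (Q j t (minus_coord p j x)) * (h ((minus_coord p j x)(j := t)) * ennreal (R ((minus_coord p j x)(j := t)))) \<partial>\<nu> \<partial>PX)"
  proof (intro DD_int)
    have Rm[measurable]: "(\<lambda>x. ennreal (R x)) \<in> borel_measurable (Rp p)"
      by (rule measurable_compose[OF R_meas measurable_ennreal])
    show "(\<lambda>x. h x * ennreal (R x)) \<in> borel_measurable (Rp p)" using h by measurable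
  qed
  also have "\<dots> = (\<integral>\<^sup>+ x. \<integral>\<^sup>+ t. ennreal (P j t (minus_coord p j x)) * h ((minus_coord p j x)(j := t)) \<partial>\<nu> \<partial>PX)"
  proof (intro nn_integral_cong)
    fix x t assume x: "x \<in> space PX"
    then have y: "minus_coord p j x \<in> space (Rpmj p j)"
      using mc_space[OF jp] sets_eq_imp_space_eq[OF PXs] by auto
    have "R ((minus_coord p j x)(j := t)) = P j t (minus_coord p j x) / Q j t (minus_coord p j x)"
      unfolding R_def mc_upd[OF jp y] by simp
    then show "ennreal (Q j t (minus_coord p j x)) * (h ((minus_coord p j x)(j := t)) * ennreal (R ((minus_coord p j x)(j := t))))
        = ennreal (P j t (minus_coord p j x)) * h ((minus_coord p j x)(j := t))"
      using f_nonneg[OF jp nu_sets nu_sf Pd] f_nonneg[OF jp nu_sets nu_sf Qd] supp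
      by (simp add: ennreal_ratio)
  qed
  also have "\<dots> = (\<integral>\<^sup>+ x. h x \<partial>PX)" by (rule PX_int[OF h, symmetric])
  finally show ?thesis .
qed

lemma marg: "distr DD (Rpmj p j) (minus_coord p j) = distr PX (Rpmj p j) (minus_coord p j)"
proof (rule measure_eqI)
  show "sets (distr DD (Rpmj p j) (minus_coord p j)) = sets (distr PX (Rpmj p j) (minus_coord p j))" by simp
next
  fix A assume "A \<in> sets (distr DD (Rpmj p j) (minus_coord p j))"
  then have A: "A \<in> sets (Rpmj p j)" by simp
  have mD: "minus_coord p j \<in> measurable DD (Rpmj p j)"
    using mc_meas[OF jp] by (simp add: measurable_cong_sets[OF DD_sets refl])
  have mP: "minus_coord p j \<in> measurable PX (Rpmj p j)"
    using mc_meas[OF jp] by (simp add: measurable_cong_sets[OF PXs refl])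
  have hm: "(\<lambda>x. indicator A (minus_coord p j x) :: ennreal) \<in> borel_measurable (Rp p)"
    using A mc_meas[OF jp] by measurable
  have "emeasure (distr DD (Rpmj p j) (minus_coord p j)) A = (\<integral>\<^sup>+ x. indicator A x \<partial>distr DD (Rpmj p j) (minus_coord p j))"
    using A by (simp add: nn_integral_indicator)
  also have "\<dots> = (\<integral>\<^sup>+ x. indicator A (minus_coord p j x) \<partial>DD)"
    using A by (intro nn_integral_distr[OF mD]) simp
  also have "\<dots> = (\<integral>\<^sup>+ x. \<integral>\<^sup>+ t. ennreal (Q j t (minus_coord p j x)) * indicator A (minus_coord p j ((minus_coord p j x)(j := t))) \<partial>\<nu> \<partial>PX)"
    by (rule DD_int[OF hm])
  also have "\<dots> = (\<integral>\<^sup>+ x. (\<integral>\<^sup>+ t. ennreal (Q j t (minus_coord p j x)) \<partial>\<nu>) * indicator A (minus_coord p j x) \<partial>PX)"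
  proof (intro nn_integral_cong)
    fix x assume x: "x \<in> space PX"
    have fm: "(\<lambda>t. ennreal (Q j t (minus_coord p j x))) \<in> borel_measurable \<nu>"
      using measurable_compose[OF measurable_compose_Pair1[OF _ f_meas2[OF jp nu_sets nu_sf Qd]] measurable_ennreal]
        x mc_space[OF jp] sets_eq_imp_space_eq[OF PXs] by auto
    show "(\<integral>\<^sup>+ t. ennreal (Q j t (minus_coord p j x)) * indicator A (minus_coord p j ((minus_coord p j x)(j := t))) \<partial>\<nu>)
      = (\<integral>\<^sup>+ t. ennreal (Q j t (minus_coord p j x)) \<partial>\<nu>) * indicator A (minus_coord p j x)"
      unfolding mc_upd2[OF jp] mc_idem by (rule nn_integral_multc[OF fm])
  qed
  also have "\<dots> = (\<integral>\<^sup>+ x. indicator A (minus_coord p j x) \<partial>PX)"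
    using f_int1[OF jp nu_sets nu_sf Qd] by simp
  also have "\<dots> = (\<integral>\<^sup>+ x. indicator A x \<partial>distr PX (Rpmj p j) (minus_coord p j))"
    using A by (intro nn_integral_distr[OF mP, symmetric]) simp
  also have "\<dots> = emeasure (distr PX (Rpmj p j) (minus_coord p j)) A"
    using A by (simp add: nn_integral_indicator)
  finally show "emeasure (distr DD (Rpmj p j) (minus_coord p j)) A = emeasure (distr PX (Rpmj p j) (minus_coord p j)) A" .
qed

lemma DD_cond: "has_conditional p j \<nu> (Q j) DD"
proof -
  have "recombine p j \<nu> (Q j) DD = bind (distr DD (Rpmj p j) (minus_coord p j)) (kern p j \<nu> (Q j))"
    by (rule recomb_kern)
  also have "\<dots> = bind (distr PX (Rpmj p j) (minus_coord p j)) (kern p j \<nu> (Q j))"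
    by (simp only: marg)
  also have "\<dots> = DD" by (rule recomb_kern[symmetric])
  finally show ?thesis unfolding has_conditional_def by simp
qed


abbreviation "JD \<equiv> joint_law p DD K"
abbreviation "JP \<equiv> joint_law p PX K"

lemma DD_ne: "space DD \<noteq> {}" using prob_space.not_empty[OF DD_prob] .
lemma PX_ne: "space PX \<noteq> {}" using prob_space.not_empty[OF PXp] .

lemma JD_sets: "sets JD = sets (Rp p \<Otimes>\<^sub>M Rp p)" by (rule joint_sets[OF Kk DD_sets DD_ne])
lemma JP_sets: "sets JP = sets (Rp p \<Otimes>\<^sub>M Rp p)" by (rule joint_sets[OF Kk PXs PX_ne])
lemma JP_prob: "prob_space JP" by (rule joint_prob[OF Kk PXs PXp])

lemma swap_meas[measurable]: "swap_coord j \<in> measurable (Rp p \<Otimes>\<^sub>M Rp p) (Rp p \<Otimes>\<^sub>M Rp p)"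
proof -
  have I: "{..<p} = {..<p} \<union> {j}" using jp by auto
  have "(\<lambda>z. (fst z)(j := snd z j)) \<in> measurable (Rp p \<Otimes>\<^sub>M Rp p) (Rp p)"
    using jp by (intro measurable_fun_upd[OF I]) auto
  moreover have "(\<lambda>z. (snd z)(j := fst z j)) \<in> measurable (Rp p \<Otimes>\<^sub>M Rp p) (Rp p)"
    using jp by (intro measurable_fun_upd[OF I]) auto
  ultimately show ?thesis unfolding swap_coord_def by (intro measurable_Pair) auto
qed

lemma swap_int:
  assumes H: "H \<in> borel_measurable (Rp p \<Otimes>\<^sub>M Rp p)"
  shows "(\<integral>\<^sup>+ z. H z \<partial>JD) = (\<integral>\<^sup>+ z. H (swap_coord j z) \<partial>JD)"
proof -
  have eq: "distr JD (Rp p \<Otimes>\<^sub>M Rp p) (swap_coord j) = JD"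
    using exch DD_prob DD_sets DD_cond unfolding pairwise_exchangeable_def by blast
  have sm: "swap_coord j \<in> measurable JD (Rp p \<Otimes>\<^sub>M Rp p)"
    using swap_meas by (simp add: measurable_cong_sets[OF JD_sets refl])
  have "(\<integral>\<^sup>+ z. H z \<partial>JD) = (\<integral>\<^sup>+ z. H z \<partial>distr JD (Rp p \<Otimes>\<^sub>M Rp p) (swap_coord j))"
    by (rule arg_cong[where f="\<lambda>M. integral\<^sup>N M H", OF eq[symmetric]])
  also have "\<dots> = (\<integral>\<^sup>+ z. H (swap_coord j z) \<partial>JD)"
    using H by (intro nn_integral_distr[OF sm]) simp
  finally show ?thesis .
qed

lemma J_CM:
  assumes G: "G \<in> borel_measurable (Rp p \<Otimes>\<^sub>M Rp p)"
  shows "(\<integral>\<^sup>+ z. G z \<partial>JP) = (\<integral>\<^sup>+ z. G z * ennreal (R (fst z)) \<partial>JD)"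
proof -
  have Rm[measurable]: "(\<lambda>x. ennreal (R x)) \<in> borel_measurable (Rp p)"
    by (rule measurable_compose[OF R_meas measurable_ennreal])
  have G2: "(\<lambda>z. G z * ennreal (R (fst z))) \<in> borel_measurable (Rp p \<Otimes>\<^sub>M Rp p)"
    using G by measurable
  have "(\<integral>\<^sup>+ z. G z \<partial>JP) = (\<integral>\<^sup>+ x. \<integral>\<^sup>+ xt. G (x, xt) \<partial>K x \<partial>PX)"
    by (rule joint_int[OF Kk PXs G])
  also have "\<dots> = (\<integral>\<^sup>+ x. (\<integral>\<^sup>+ xt. G (x, xt) \<partial>K x) * ennreal (R x) \<partial>DD)"
    by (rule CM[symmetric]) (rule joint_inner_meas[OF Kk refl G])
  also have "\<dots> = (\<integral>\<^sup>+ x. \<integral>\<^sup>+ xt. G (x, xt) * ennreal (R x) \<partial>K x \<partial>DD)"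
  proof (intro nn_integral_cong)
    fix x assume x: "x \<in> space DD"
    then have x': "x \<in> space (Rp p)" using sets_eq_imp_space_eq[OF DD_sets] by simp
    have "(\<lambda>xt. G (x, xt)) \<in> borel_measurable (K x)"
      using measurable_compose_Pair1[OF x' G] by (simp add: measurable_cong_sets[OF K_sets[OF Kk x'] refl])
    then show "(\<integral>\<^sup>+ xt. G (x, xt) \<partial>K x) * ennreal (R x) = (\<integral>\<^sup>+ xt. G (x, xt) * ennreal (R x) \<partial>K x)"
      by (rule nn_integral_multc[symmetric])
  qed
  also have "\<dots> = (\<integral>\<^sup>+ z. G z * ennreal (R (fst z)) \<partial>JD)"
    using joint_int[OF Kk DD_sets G2] by simp
  finally show ?thesis .
qed

definition indQ :: "(nat \<Rightarrow> real) \<Rightarrow> ennreal" where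
  "indQ x = (if Q j (x j) (minus_coord p j x) \<le> 0 then 1 else 0)"

lemma Qc_meas[measurable]: "(\<lambda>x. Q j (x j) (minus_coord p j x)) \<in> borel_measurable (Rp p)"
  using jp by (intro dens_comp[OF jp Qd] mc_meas) auto

lemma indQ_meas[measurable]: "indQ \<in> borel_measurable (Rp p)"
  unfolding indQ_def by measurable

lemma DD_AE0: "(\<integral>\<^sup>+ x. indQ x \<partial>DD) = 0"
proof -
  have "(\<integral>\<^sup>+ x. indQ x \<partial>DD) = (\<integral>\<^sup>+ x. \<integral>\<^sup>+ t. ennreal (Q j t (minus_coord p j x)) * indQ ((minus_coord p j x)(j := t)) \<partial>\<nu> \<partial>PX)"
    by (rule DD_int[OF indQ_meas])
  also have "\<dots> = (\<integral>\<^sup>+ x. \<integral>\<^sup>+ t. 0 \<partial>\<nu> \<partial>PX)"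
  proof (intro nn_integral_cong)
    fix x t
    have "0 \<le> Q j t (minus_coord p j x)" by (rule f_nonneg[OF jp nu_sets nu_sf Qd])
    then show "ennreal (Q j t (minus_coord p j x)) * indQ ((minus_coord p j x)(j := t)) = 0"
      unfolding indQ_def mc_upd2[OF jp] mc_idem by auto
  qed
  finally show ?thesis by simp
qed

lemma AE1: "AE z in JD. 0 < Q j (fst z j) (minus_coord p j (fst z))"
proof -
  have m: "(\<lambda>z. indQ (fst z)) \<in> borel_measurable JD"
    by (simp add: measurable_cong_sets[OF JD_sets refl])
  have "(\<integral>\<^sup>+ z. indQ (fst z) \<partial>JD) = 0"
    using joint_fst[OF Kk DD_sets indQ_meas] DD_AE0 by simp
  then have "AE z in JD. indQ (fst z) = 0" using nn_integral_0_iff_AE[OF m] by simp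
  then show ?thesis by eventually_elim (auto simp: indQ_def split: if_splits)
qed

lemma AE2: "AE z in JD. 0 < Q j (snd z j) (minus_coord p j (fst z))"
proof -
  define v where "v z = (if Q j (snd z j) (minus_coord p j (fst z)) \<le> 0 then 1 else (0::ennreal))" for z
  have vm: "v \<in> borel_measurable (Rp p \<Otimes>\<^sub>M Rp p)"
  proof -
    have "(\<lambda>z. Q j (snd z j) (minus_coord p j (fst z))) \<in> borel_measurable (Rp p \<Otimes>\<^sub>M Rp p)"
      using jp by (intro dens_comp[OF jp Qd] measurable_compose[OF measurable_fst mc_meas[OF jp]]) auto
    then show ?thesis unfolding v_def by measurable
  qed
  have m: "v \<in> borel_measurable JD"
    using vm by (simp add: measurable_cong_sets[OF JD_sets refl])
  have vs: "v (swap_coord j z) = indQ (fst z)" for z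
    unfolding v_def indQ_def swap_coord_def by (simp add: mc_upd2[OF jp])
  have "(\<integral>\<^sup>+ z. v z \<partial>JD) = (\<integral>\<^sup>+ z. indQ (fst z) \<partial>JD)"
    unfolding swap_int[OF vm] vs ..
  also have "\<dots> = 0" using joint_fst[OF Kk DD_sets indQ_meas] DD_AE0 by simp
  finally have "AE z in JD. v z = 0" using nn_integral_0_iff_AE[OF m] by simp
  then show ?thesis by eventually_elim (auto simp: v_def split: if_splits)
qed


abbreviation "LL z \<equiv> llr p P Q j (fst z) (snd z)"

lemma LL_meas[measurable]: "(\<lambda>z. LL z) \<in> borel_measurable (Rp p \<Otimes>\<^sub>M Rp p)"
proof -
  have mcf: "(\<lambda>z. minus_coord p j (fst z)) \<in> measurable (Rp p \<Otimes>\<^sub>M Rp p) (Rpmj p j)"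
    by (rule measurable_compose[OF measurable_fst mc_meas[OF jp]])
  have [measurable]: "(\<lambda>z. P j (fst z j) (minus_coord p j (fst z))) \<in> borel_measurable (Rp p \<Otimes>\<^sub>M Rp p)"
    using jp by (intro dens_comp[OF jp Pd] mcf) auto
  have [measurable]: "(\<lambda>z. Q j (fst z j) (minus_coord p j (fst z))) \<in> borel_measurable (Rp p \<Otimes>\<^sub>M Rp p)"
    using jp by (intro dens_comp[OF jp Qd] mcf) auto
  have [measurable]: "(\<lambda>z. P j (snd z j) (minus_coord p j (fst z))) \<in> borel_measurable (Rp p \<Otimes>\<^sub>M Rp p)"
    using jp by (intro dens_comp[OF jp Pd] mcf) auto
  have [measurable]: "(\<lambda>z. Q j (snd z j) (minus_coord p j (fst z))) \<in> borel_measurable (Rp p \<Otimes>\<^sub>M Rp p)"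
    using jp by (intro dens_comp[OF jp Qd] mcf) auto
  show ?thesis unfolding llr_def by measurable
qed

lemma LL_swap: "LL (swap_coord j z) = - LL z"
proof -
  define a where "a = P j (fst z j) (minus_coord p j (fst z))"
  define b where "b = Q j (fst z j) (minus_coord p j (fst z))"
  define c where "c = P j (snd z j) (minus_coord p j (fst z))"
  define d where "d = Q j (snd z j) (minus_coord p j (fst z))"
  have 1: "LL (swap_coord j z) = ln ((c * b) / (d * a))"
    unfolding llr_def swap_coord_def a_def b_def c_def d_def by (simp add: mc_upd2[OF jp])
  have 2: "LL z = ln ((a * d) / (b * c))"
    unfolding llr_def a_def b_def c_def d_def ..
  have "(c * b) / (d * a) = inverse ((a * d) / (b * c))" by (simp add: ac_simps)
  then show ?thesis unfolding 1 2 by (simp only: ln_inverse)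
qed

lemma ratio_real:
  assumes "0 < (a::real)" "0 < b" "0 < c" "0 < d"
  shows "c / d = exp (- ln ((a * d) / (b * c))) * (a / b)"
  using assms by (simp add: exp_minus field_simps)

lemma S_identity:
  assumes g: "g \<in> borel_measurable borel" and gnn: "\<And>u. 0 \<le> g u"
  shows "(\<integral>\<^sup>+ z. ennreal (g (LL z)) \<partial>JP) = (\<integral>\<^sup>+ z. ennreal (g (- LL z) * exp (- LL z)) \<partial>JP)"
proof -
  have g1[measurable]: "(\<lambda>z. ennreal (g (LL z))) \<in> borel_measurable (Rp p \<Otimes>\<^sub>M Rp p)"
    using g by measurable
  have g2[measurable]: "(\<lambda>z. ennreal (g (- LL z) * exp (- LL z))) \<in> borel_measurable (Rp p \<Otimes>\<^sub>M Rp p)"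
    using g by measurable
  have Rm[measurable]: "(\<lambda>x. ennreal (R x)) \<in> borel_measurable (Rp p)"
    by (rule measurable_compose[OF R_meas measurable_ennreal])
  have "(\<integral>\<^sup>+ z. ennreal (g (LL z)) \<partial>JP) = (\<integral>\<^sup>+ z. ennreal (g (LL z)) * ennreal (R (fst z)) \<partial>JD)"
    by (rule J_CM[OF g1])
  also have "\<dots> = (\<integral>\<^sup>+ z. ennreal (g (LL (swap_coord j z))) * ennreal (R (fst (swap_coord j z))) \<partial>JD)"
    by (rule swap_int) measurable
  also have "\<dots> = (\<integral>\<^sup>+ z. ennreal (g (- LL z) * exp (- LL z)) * ennreal (R (fst z)) \<partial>JD)"
  proof (rule nn_integral_cong_AE)
    show "AE z in JD. ennreal (g (LL (swap_coord j z))) * ennreal (R (fst (swap_coord j z)))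
        = ennreal (g (- LL z) * exp (- LL z)) * ennreal (R (fst z))"
      using AE1 AE2
    proof eventually_elim
      case (elim z)
      define a where "a = P j (fst z j) (minus_coord p j (fst z))"
      define b where "b = Q j (fst z j) (minus_coord p j (fst z))"
      define c where "c = P j (snd z j) (minus_coord p j (fst z))"
      define d where "d = Q j (snd z j) (minus_coord p j (fst z))"
      have pos: "0 < a" "0 < b" "0 < c" "0 < d"
        using elim supp unfolding a_def b_def c_def d_def by auto
      have L: "LL z = ln ((a * d) / (b * c))"
        unfolding llr_def a_def b_def c_def d_def ..
      have R1: "R (fst (swap_coord j z)) = c / d"
        unfolding R_def swap_coord_def c_def d_def by (simp add: mc_upd2[OF jp])
      have R2: "R (fst z) = a / b" unfolding R_def a_def b_def ..
      have "R (fst (swap_coord j z)) = exp (- LL z) * R (fst z)"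
        unfolding R1 R2 L using ratio_real[OF pos] .
      moreover have R0: "0 \<le> R (fst z)" using pos R2 by simp
      moreover have g0: "0 \<le> g (- LL z)" by (rule gnn)
      ultimately show ?case unfolding LL_swap
        by (metis ennreal_mult exp_ge_zero mult.assoc mult_nonneg_nonneg)

    qed
  qed
  also have "\<dots> = (\<integral>\<^sup>+ z. ennreal (g (- LL z) * exp (- LL z)) \<partial>JP)"
    by (rule J_CM[OF g2, symmetric])
  finally show ?thesis .
qed

lemma row_bound:
  assumes l: "0 \<le> l"
  shows "(\<integral>\<^sup>+ z. ennreal (Fexp l (LL z)) \<partial>JP) \<le> 1"
proof -
  define w where "w u = 1 / (1 + exp u)" for u :: real
  have w01: "0 \<le> w u" "w u \<le> 1" for u
    unfolding w_def by (auto simp: add_pos_pos divide_le_eq)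
  have F0: "0 \<le> Fexp l u" for u unfolding Fexp_def by simp
  have wm[measurable]: "w \<in> borel_measurable borel" unfolding w_def by measurable
  have Fm[measurable]: "Fexp l \<in> borel_measurable borel" unfolding Fexp_def by measurable
  have "(\<integral>\<^sup>+ z. ennreal (Fexp l (LL z)) \<partial>JP)
      = (\<integral>\<^sup>+ z. ennreal (Fexp l (LL z) * (1 - w (LL z))) + ennreal (Fexp l (LL z) * w (LL z)) \<partial>JP)"
  proof (intro nn_integral_cong)
    fix z
    have a: "0 \<le> Fexp l (LL z) * (1 - w (LL z))" "0 \<le> Fexp l (LL z) * w (LL z)"
      using F0 w01 by auto
    have "Fexp l (LL z) = Fexp l (LL z) * (1 - w (LL z)) + Fexp l (LL z) * w (LL z)"
      by (simp add: algebra_simps)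
    then show "ennreal (Fexp l (LL z)) = ennreal (Fexp l (LL z) * (1 - w (LL z))) + ennreal (Fexp l (LL z) * w (LL z))"
      using ennreal_plus[OF a] by simp
  qed
  also have "\<dots> = (\<integral>\<^sup>+ z. ennreal (Fexp l (LL z) * (1 - w (LL z))) \<partial>JP) + (\<integral>\<^sup>+ z. ennreal (Fexp l (LL z) * w (LL z)) \<partial>JP)"
    by (rule nn_integral_add) (simp_all add: measurable_cong_sets[OF JP_sets refl])
  also have "(\<integral>\<^sup>+ z. ennreal (Fexp l (LL z) * w (LL z)) \<partial>JP) = (\<integral>\<^sup>+ z. ennreal ((Fexp l (- LL z) * w (- LL z)) * exp (- LL z)) \<partial>JP)"
    using S_identity[of "\<lambda>u. Fexp l u * w u"] F0 w01 by simp
  also have "\<dots> = (\<integral>\<^sup>+ z. ennreal (Fexp l (- LL z) * w (LL z)) \<partial>JP)"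
  proof (intro nn_integral_cong)
    fix z
    have "w (- LL z) * exp (- LL z) = w (LL z)"
      unfolding w_def by (simp add: exp_minus field_simps)
    then show "ennreal ((Fexp l (- LL z) * w (- LL z)) * exp (- LL z)) = ennreal (Fexp l (- LL z) * w (LL z))"
      by (simp add: mult.assoc)
  qed
  also have "(\<integral>\<^sup>+ z. ennreal (Fexp l (LL z) * (1 - w (LL z))) \<partial>JP) + \<dots>
      = (\<integral>\<^sup>+ z. ennreal (Fexp l (LL z) * (1 - w (LL z))) + ennreal (Fexp l (- LL z) * w (LL z)) \<partial>JP)"
    by (rule nn_integral_add[symmetric]) (simp_all add: measurable_cong_sets[OF JP_sets refl])
  also have "\<dots> \<le> (\<integral>\<^sup>+ z. 1 \<partial>JP)"
  proof (intro nn_integral_mono)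
    fix z
    define u where "u = LL z"
    have "Fexp l u * (1 - w u) + Fexp l (- u) * w u = (Fexp l u * exp u + Fexp l (- u)) / (1 + exp u)"
    proof -
      have ne: "1 + exp u \<noteq> 0" by (metis add_pos_pos exp_gt_zero less_irrefl zero_less_one)
      have "1 - 1 / (1 + exp u) = exp u / (1 + exp u)" using ne by (simp add: field_simps)
      then show ?thesis unfolding w_def by (simp add: add_divide_distrib)
    qed
    also have "\<dots> \<le> 1" using Phi_le_1[OF l, of u] by (simp add: add_pos_pos)
    finally have "Fexp l u * (1 - w u) + Fexp l (- u) * w u \<le> 1" .
    then show "ennreal (Fexp l (LL z) * (1 - w (LL z))) + ennreal (Fexp l (- LL z) * w (LL z)) \<le> 1"
      unfolding u_def[symmetric] using F0 w01
      by (simp add: ennreal_plus[symmetric] del: ennreal_plus)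
  qed
  also have "\<dots> = 1" using prob_space.emeasure_space_1[OF JP_prob] by simp
  finally show ?thesis .
qed

end

lemma expo_bound:
  fixes S W V t l :: real
  assumes V: "0 < V" and t: "0 \<le> t" and W: "W \<le> V" and S: "V/2 + t < S" and l: "l = t / V"
  shows "t^2 / (2*V) \<le> l * S - (l + l^2)/2 * W"
proof -
  have l0: "0 \<le> l" using V t l by simp
  have c0: "0 \<le> (l + l^2)/2" using l0 by simp
  have "(l + l^2)/2 * W \<le> (l + l^2)/2 * V" using W c0 by (rule mult_left_mono)
  moreover have "l * (V/2 + t) \<le> l * S" using l0 S by (intro mult_left_mono) auto
  moreover have "l * (V/2 + t) - (l + l^2)/2 * V = t^2/(2*V)"
    using V unfolding l by (simp add: field_simps power2_eq_square)
  ultimately show ?thesis by linarith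
qed

lemma t_sq:
  fixes n p :: nat and \<delta> :: real
  assumes "1 \<le> p" "0 < real n * \<delta>^2"
  shows "(2 * \<delta> * sqrt (real n * ln (real p)))^2 / (2 * (real n * \<delta>^2)) = 2 * ln (real p)"
proof -
  have "0 \<le> ln (real p)" using assms by simp
  then have "(sqrt (real n * ln (real p)))^2 = real n * ln (real p)" by simp
  then have "(2 * \<delta> * sqrt (real n * ln (real p)))^2 = 4 * \<delta>^2 * (real n * ln (real p))"
    by (simp add: power_mult_distrib)
  then have "(2 * \<delta> * sqrt (real n * ln (real p)))^2 / (2 * (real n * \<delta>^2))
      = 4 * \<delta>^2 * (real n * ln (real p)) / (2 * (real n * \<delta>^2))" by (simp only:)
  also have "\<dots> = 2 * ln (real p)"
  proof -
    have "real n \<noteq> 0" "\<delta> \<noteq> 0" using assms(2) by (auto simp del: of_nat_eq_0_iff)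
    then show ?thesis by (simp add: field_simps power2_eq_square)
  qed
  finally show ?thesis .
qed

lemma prod_le_one_ennreal:
  "(\<And>i. i \<in> A \<Longrightarrow> f i \<le> (1::ennreal)) \<Longrightarrow> prod f A \<le> 1"
proof (induct A rule: infinite_finite_induct)
  case (insert x F)
  then have "f x * prod f F \<le> 1 * 1" by (intro mult_mono) auto
  then show ?case using insert by simp
qed auto

theorem lemma6:
  fixes p n :: nat
    and \<delta> :: real
    and PX :: "(nat \<Rightarrow> real) measure"
    and \<nu> :: "nat \<Rightarrow> real measure"
    and P Q :: "nat \<Rightarrow> real \<Rightarrow> (nat \<Rightarrow> real) \<Rightarrow> real"
    and K :: "(nat \<Rightarrow> real) \<Rightarrow> (nat \<Rightarrow> real) measure"
  assumes p_pos: "1 \<le> p"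
    and delta: "0 \<le> \<delta>"
    and PX: "prob_space PX" "sets PX = sets (Rp p)"
    and base: "\<And>j. j < p \<Longrightarrow> discrete_or_continuous (\<nu> j)"
    and P_dens: "\<And>j. j < p \<Longrightarrow> is_cond_density p j (\<nu> j) (P j)"
    and P_true: "\<And>j. j < p \<Longrightarrow> has_conditional p j (\<nu> j) (P j) PX"
    and Q_dens: "\<And>j. j < p \<Longrightarrow> is_cond_density p j (\<nu> j) (Q j)"
    and same_support: "\<And>j t y. j < p \<Longrightarrow> (0 < P j t y \<longleftrightarrow> 0 < Q j t y)"
    and K_kernel: "K \<in> measurable (Rp p) (prob_algebra (Rp p))"
    and exch: "\<And>j. j < p \<Longrightarrow> pairwise_exchangeable p j (\<nu> j) (Q j) K"
  defines "Data \<equiv> PiM {..<n} (\<lambda>_. joint_law p PX K)"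
    and "E \<equiv> {\<omega> \<in> space (PiM {..<n} (\<lambda>_. joint_law p PX K)). \<forall>j<p.
               (\<Sum>i<n. (llr p P Q j (fst (\<omega> i)) (snd (\<omega> i)))\<^sup>2) \<le> real n * \<delta>\<^sup>2}"
  shows "measure Data {\<omega> \<in> space Data.
            Max ((\<lambda>j. KLhat p n P Q j \<omega>) ` {..<p})
              \<le> real n * \<delta>\<^sup>2 / 2 + 2 * \<delta> * sqrt (real n * ln (real p))}
         \<ge> 1 - 1 / real p - measure Data (space Data - E)"
proof -
  define M where "M = joint_law p PX K"
  define B where "B = real n * \<delta>\<^sup>2 / 2 + 2 * \<delta> * sqrt (real n * ln (real p))"
  define V where "V = real n * \<delta>\<^sup>2"
  define L where "L j z = llr p P Q j (fst z) (snd z)" for j z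
  define Gs where "Gs = {\<omega> \<in> space Data. Max ((\<lambda>j. KLhat p n P Q j \<omega>) ` {..<p}) \<le> B}"
  have Data: "Data = PiM {..<n} (\<lambda>_. M)" unfolding Data_def M_def ..
  have E': "E = {\<omega> \<in> space Data. \<forall>j<p. (\<Sum>i<n. (L j (\<omega> i))\<^sup>2) \<le> V}"
    unfolding E_def Data_def L_def V_def ..
  have nuf: "sets (\<nu> j) = sets borel" "sigma_finite_measure (\<nu> j)" if "j < p" for j
    using nu_facts[OF base[OF that]] by auto
  have PXne: "space PX \<noteq> {}" using prob_space.not_empty[OF PX(1)] .
  have Mprob: "prob_space M" unfolding M_def by (rule joint_prob[OF K_kernel PX(2) PX(1)])
  have Msets: "sets M = sets (Rp p \<Otimes>\<^sub>M Rp p)" unfolding M_def by (rule joint_sets[OF K_kernel PX(2) PXne])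
  have Dprob: "prob_space Data" unfolding Data using Mprob by (intro prob_space_PiM)
  interpret D: prob_space Data by (rule Dprob)
  have Lm: "L j \<in> borel_measurable M" if j: "j < p" for j
    using LL_meas[of j p "\<nu> j" P Q PX K, OF j nuf[OF j] P_dens[OF j] Q_dens[OF j] PX P_true[OF j] same_support[OF j] K_kernel exch[OF j]]
    unfolding L_def by (simp add: measurable_cong_sets[OF Msets refl])
  have Lc: "(\<lambda>\<omega>. L j (\<omega> i)) \<in> borel_measurable Data" if "j < p" "i < n" for j i
  proof -
    have "(\<lambda>\<omega>. \<omega> i) \<in> measurable (PiM {..<n} (\<lambda>_. M)) M"
      using measurable_component_singleton[of i "{..<n}" "\<lambda>_. M"] that by simp
    from measurable_compose[OF this Lm[OF that(1)]] show ?thesis unfolding Data .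
  qed
  have KL: "KLhat p n P Q j \<omega> = (\<Sum>i<n. L j (\<omega> i))" for j \<omega>
    unfolding KLhat_def L_def ..
  have KLm: "(\<lambda>\<omega>. KLhat p n P Q j \<omega>) \<in> borel_measurable Data" if "j < p" for j
    unfolding KL using Lc[OF that] by (intro borel_measurable_sum) auto
  have Sqm: "(\<lambda>\<omega>. \<Sum>i<n. (L j (\<omega> i))\<^sup>2) \<in> borel_measurable Data" if "j < p" for j
    using Lc[OF that] by (intro borel_measurable_sum borel_measurable_power) auto
  have Esets: "E \<in> sets Data"
  proof -
    have "E = (\<Inter>j\<in>{..<p}. {\<omega> \<in> space Data. (\<Sum>i<n. (L j (\<omega> i))\<^sup>2) \<le> V})"
    proof -
      have z: "0 \<in> {..<p}" using p_pos by simp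
      show ?thesis unfolding E' using z by blast
    qed
    also have "\<dots> \<in> sets Data"
    proof (intro sets.finite_INT)
      fix j assume "j \<in> {..<p}"
      then have [measurable]: "(\<lambda>\<omega>. \<Sum>i<n. (L j (\<omega> i))\<^sup>2) \<in> borel_measurable Data" using Sqm by auto
      show "{\<omega> \<in> space Data. (\<Sum>i<n. (L j (\<omega> i))\<^sup>2) \<le> V} \<in> sets Data" by measurable
    qed (use p_pos in \<open>auto simp: lessThan_empty_iff\<close>)
    finally show ?thesis .
  qed
  have Gsets: "Gs \<in> sets Data"
  proof -
    have "(\<lambda>\<omega>. Max ((\<lambda>j. KLhat p n P Q j \<omega>) ` {..<p})) \<in> borel_measurable Data"
      using KLm by (intro borel_measurable_Max) auto
    then show ?thesis unfolding Gs_def by measurable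
  qed
  have goal: "1 - 1 / real p - measure Data (space Data - E) \<le> measure Data Gs"
  proof (cases "V = 0")
    case True
    have B0: "B = 0"
    proof -
      have "n = 0 \<or> \<delta> = 0" using True unfolding V_def by auto
      then show ?thesis unfolding B_def by auto
    qed
    have "E \<subseteq> Gs"
    proof
      fix \<omega> assume w: "\<omega> \<in> E"
      then have sp: "\<omega> \<in> space Data" unfolding E' by auto
      have "KLhat p n P Q j \<omega> = 0" if j: "j < p" for j
      proof -
        have "(\<Sum>i<n. (L j (\<omega> i))\<^sup>2) \<le> 0" using w j True unfolding E' by auto
        moreover have "0 \<le> (\<Sum>i<n. (L j (\<omega> i))\<^sup>2)" by (intro sum_nonneg) auto
        ultimately have "(\<Sum>i<n. (L j (\<omega> i))\<^sup>2) = 0" by linarith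
        then have "\<forall>i\<in>{..<n}. (L j (\<omega> i))\<^sup>2 = 0" by (subst sum_nonneg_eq_0_iff[symmetric]) auto
        then show ?thesis unfolding KL by simp
      qed
      then have "Max ((\<lambda>j. KLhat p n P Q j \<omega>) ` {..<p}) \<le> 0"
        using p_pos by (subst Max_le_iff) (auto simp: lessThan_empty_iff)
      then show "\<omega> \<in> Gs" unfolding Gs_def B0 using sp by simp
    qed
    then have "measure Data E \<le> measure Data Gs" using Gsets by (intro D.finite_measure_mono)
    moreover have "measure Data (space Data - E) = 1 - measure Data E"
      using D.finite_measure_compl[OF Esets] D.prob_space by simp
    moreover have "0 \<le> 1 / real p" by simp
    ultimately show ?thesis by linarith
  next
    case False
    then have V0: "0 < V" unfolding V_def by simp
    define t where "t = 2 * \<delta> * sqrt (real n * ln (real p))"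
    have t0: "0 \<le> t" unfolding t_def using delta p_pos by simp
    define l where "l = t / V"
    have l0: "0 \<le> l" unfolding l_def using t0 V0 by simp
    have Bt: "B = V/2 + t" unfolding B_def V_def t_def by simp
    have tV: "t^2 / (2 * V) = 2 * ln (real p)"
      unfolding t_def V_def using t_sq[OF p_pos] V0 unfolding V_def by simp
    define A where "A j = {\<omega> \<in> space Data. B < KLhat p n P Q j \<omega>} \<inter> E" for j
    have Asets: "A j \<in> sets Data" if "j < p" for j
      unfolding A_def using KLm[OF that] Esets by measurable
    have Abound: "measure Data (A j) \<le> 1 / (real p)^2" if j: "j < p" for j
    proof -
      define Phi where "Phi \<omega> = (\<Prod>i<n. ennreal (Fexp l (L j (\<omega> i))))" for \<omega>
      have Fm: "(\<lambda>z. ennreal (Fexp l (L j z))) \<in> borel_measurable M"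
        using Lm[OF j] unfolding Fexp_def by measurable
      have psf: "product_sigma_finite (\<lambda>_. M)"
        unfolding product_sigma_finite_def using Mprob by (simp add: prob_space_imp_sigma_finite)
      have "(\<integral>\<^sup>+ \<omega>. Phi \<omega> \<partial>Data) = (\<Prod>i<n. \<integral>\<^sup>+ z. ennreal (Fexp l (L j z)) \<partial>M)"
        unfolding Phi_def Data
        by (rule product_sigma_finite.product_nn_integral_prod[OF psf, where f="\<lambda>_ z. ennreal (Fexp l (L j z))"])
           (use Fm in auto)
      also have "\<dots> \<le> 1"
      proof (rule prod_le_one_ennreal)
        fix i
        show "(\<integral>\<^sup>+ z. ennreal (Fexp l (L j z)) \<partial>M) \<le> 1"
          using row_bound[of j p "\<nu> j" P Q PX K, OF j nuf[OF j] P_dens[OF j] Q_dens[OF j] PX P_true[OF j] same_support[OF j] K_kernel exch[OF j] l0]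
          unfolding L_def M_def .
      qed
      finally have int1: "(\<integral>\<^sup>+ \<omega>. Phi \<omega> \<partial>Data) \<le> 1" by simp
      have ptw: "ennreal ((real p)^2) * indicator (A j) \<omega> \<le> Phi \<omega>" for \<omega>
      proof (cases "\<omega> \<in> A j")
        case False then show ?thesis by simp
      next
        case True
        then have S: "B < (\<Sum>i<n. L j (\<omega> i))" and W: "(\<Sum>i<n. (L j (\<omega> i))\<^sup>2) \<le> V"
          unfolding A_def KL E' using j by auto
        have "t^2 / (2*V) \<le> l * (\<Sum>i<n. L j (\<omega> i)) - (l + l^2)/2 * (\<Sum>i<n. (L j (\<omega> i))\<^sup>2)"
          using S W V0 t0 by (intro expo_bound) (auto simp: Bt l_def)
        also have "\<dots> = (\<Sum>i<n. l * L j (\<omega> i) - (l + l^2)/2 * (L j (\<omega> i))^2)"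
          by (simp add: sum_subtractf sum_distrib_left)
        finally have ex: "2 * ln (real p) \<le> (\<Sum>i<n. l * L j (\<omega> i) - (l + l^2)/2 * (L j (\<omega> i))^2)"
          unfolding tV .
        have "(real p)^2 = exp (2 * ln (real p))"
          using p_pos exp_of_nat_mult[of 2 "ln (real p)"] by simp
        also have "\<dots> \<le> exp (\<Sum>i<n. l * L j (\<omega> i) - (l + l^2)/2 * (L j (\<omega> i))^2)"
          using ex by simp
        also have "\<dots> = (\<Prod>i<n. Fexp l (L j (\<omega> i)))"
          unfolding Fexp_def by (simp add: exp_sum)
        finally have "(real p)^2 \<le> (\<Prod>i<n. Fexp l (L j (\<omega> i)))" .
        moreover have "Phi \<omega> = ennreal (\<Prod>i<n. Fexp l (L j (\<omega> i)))"
          unfolding Phi_def by (rule prod_ennreal) (simp add: Fexp_def)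
        ultimately show ?thesis using True by (simp add: ennreal_leI)
      qed
      have "ennreal ((real p)^2) * emeasure Data (A j) = (\<integral>\<^sup>+ \<omega>. ennreal ((real p)^2) * indicator (A j) \<omega> \<partial>Data)"
        using Asets[OF j] by (simp add: nn_integral_cmult_indicator)
      also have "\<dots> \<le> (\<integral>\<^sup>+ \<omega>. Phi \<omega> \<partial>Data)" by (intro nn_integral_mono ptw)
      also have "\<dots> \<le> 1" by (rule int1)
      finally have "ennreal ((real p)^2 * measure Data (A j)) \<le> 1"
        by (simp add: D.emeasure_eq_measure ennreal_mult)
      then have "(real p)^2 * measure Data (A j) \<le> 1" by (simp add: ennreal_le_1)
      then show ?thesis using p_pos by (simp add: field_simps)
    qed
    have sub: "space Data - Gs \<subseteq> (space Data - E) \<union> (\<Union>j\<in>{..<p}. A j)"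
    proof
      fix \<omega> assume w: "\<omega> \<in> space Data - Gs"
      then have "B < Max ((\<lambda>j. KLhat p n P Q j \<omega>) ` {..<p})" unfolding Gs_def by auto
      then obtain j where j: "j < p" "B < KLhat p n P Q j \<omega>"
        using p_pos by (subst (asm) Max_gr_iff) (auto simp: lessThan_empty_iff)
      then show "\<omega> \<in> (space Data - E) \<union> (\<Union>j\<in>{..<p}. A j)"
        using w unfolding A_def by auto
    qed
    have "measure Data (space Data - Gs) \<le> measure Data ((space Data - E) \<union> (\<Union>j\<in>{..<p}. A j))"
      using sub Esets Asets by (intro D.finite_measure_mono) auto
    also have "\<dots> \<le> measure Data (space Data - E) + measure Data (\<Union>j\<in>{..<p}. A j)"
      using Esets Asets by (intro measure_Un_le) auto
    also have "measure Data (\<Union>j\<in>{..<p}. A j) \<le> (\<Sum>j<p. measure Data (A j))"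
      using Asets by (intro D.finite_measure_subadditive_finite) auto
    also have "\<dots> \<le> (\<Sum>j<p. 1 / (real p)^2)" by (intro sum_mono Abound) auto
    also have "\<dots> = 1 / real p" using p_pos by (simp add: power2_eq_square)
    finally have "measure Data (space Data - Gs) \<le> measure Data (space Data - E) + 1 / real p" by simp
    moreover have "measure Data (space Data - Gs) = 1 - measure Data Gs"
      using D.finite_measure_compl[OF Gsets] D.prob_space by simp
    ultimately show ?thesis by linarith
  qed
  then show ?thesis unfolding Gs_def B_def .
qed

end
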